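(* Assume the setting and Assumptions A1–A4 below. Run Ader with dynamical models (below) with \[ \mathcal{H}=\Big\{\eta_i=\frac{2^{i-1}D}{G}\sqrt{\frac1T}\ :\ i=1,\dots,N\Big\},\quad N=\Big\lceil\tfrac12\log_2(1+2T)\Big\rceil+1,\quad\alpha=\sqrt{8/(Tc^2)}. \] Then for any comparator sequence $\mathbf{u}_1,\dots,\mathbf{u}_{T+1}\in\mathcal{X}$, with $P_T'=\sum_{t=1}^T\|\mathbf{u}_{t+1}-\Phi_t(\mathbf{u}_t)\|_2$ and $k=\lfloor\frac12\log_2(1+\frac{2P_T'}{D})\rfloor+1$, \[ \sum_{t=1}^T f_t(\mathbf{x}_t)-\sum_{t=1}^T f_t(\mathbf{u}_t)\le\frac{3G}{2}\sqrt{T(D^2+2DP_T')}+\frac{c\sqrt{2T}}{4}\big[1+2\ln(k+1)\big]=O\big(\sqrt{T(1+P_T')}\big). \]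
   Context: Setting: $\mathcal{X}\subseteq\mathbb{R}^d$ nonempty closed convex; $f_t:\mathcal{X}\to\mathbb{R}$ convex differentiable, revealed after $\mathbf{x}_t$ is played. A1: $a\le f_t(\mathbf{x})\le a+c$ on $\mathcal{X}$. A2: $\max_{\mathbf{x}\in\mathcal{X}}\|\nabla f_t(\mathbf{x})\|_2\le G$. A3: $\mathbf{0}\in\mathcal{X}$, diameter of $\mathcal{X}$ at most $D$. A4: given maps $\Phi_t:\mathcal{X}\to\mathcal{X}$ with $\|\Phi_t(\mathbf{x})-\Phi_t(\mathbf{x}')\|_2\le\|\mathbf{x}-\mathbf{x}'\|_2$. Ader with dynamical models: for $\mathcal{H}=\{\eta_1\le\dots\le\eta_N\}$, one expert per $\eta$ starting at arbitrary $\mathbf{x}_1^\eta\in\mathcal{X}$ and updating $\bar{\mathbf{x}}_{t+1}^\eta=\Pi_{\mathcal{X}}[\mathbf{x}_t^\eta-\eta\nabla f_t(\mathbf{x}_t^\eta)]$, $\mathbf{x}_{t+1}^\eta=\Phi_t(\bar{\mathbf{x}}_{t+1}^\eta)$; initial weights $w_1^{\eta_i}=\frac{C}{i(i+1)}$, $C=1+1/N$; output $\mathbf{x}_t=\sum_\eta w_t^\eta\mathbf{x}_t^\eta$; weights $w_{t+1}^\eta=\frac{w_t^\eta e^{-\alpha f_t(\mathbf{x}_t^\eta)}}{\sum_\mu w_t^\mu e^{-\alpha f_t(\mathbf{x}_t^\mu)}}$. *)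

theory Defs
  imports "HOL-Analysis.Analysis"
begin

text \<open>Time index t starts at 1; the value at index 0 is irrelevant.\<close>

fun ader_expert :: "'a::euclidean_space set \<Rightarrow> (nat \<Rightarrow> 'a \<Rightarrow> 'a) \<Rightarrow> (nat \<Rightarrow> 'a \<Rightarrow> 'a)
     \<Rightarrow> (nat \<Rightarrow> real) \<Rightarrow> (nat \<Rightarrow> 'a) \<Rightarrow> nat \<Rightarrow> nat \<Rightarrow> 'a" where
  "ader_expert X Phi grad eta x1 i 0 = x1 i"
| "ader_expert X Phi grad eta x1 i (Suc t) =
     (if t = 0 then x1 i
      else Phi t (closest_point X (ader_expert X Phi grad eta x1 i t
                                   - eta i *\<^sub>R grad t (ader_expert X Phi grad eta x1 i t))))"

fun ader_weight :: "(nat \<Rightarrow> 'a \<Rightarrow> real) \<Rightarrow> nat \<Rightarrow> real \<Rightarrow> (nat \<Rightarrow> nat \<Rightarrow> 'a) \<Rightarrow> nat \<Rightarrow> nat \<Rightarrow> real" where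
  "ader_weight f N alpha ex 0 i = (1 + 1 / real N) / (real i * (real i + 1))"
| "ader_weight f N alpha ex (Suc t) i =
     (if t = 0 then (1 + 1 / real N) / (real i * (real i + 1))
      else ader_weight f N alpha ex t i * exp (- alpha * f t (ex i t))
           / (\<Sum>j\<in>{1..N}. ader_weight f N alpha ex t j * exp (- alpha * f t (ex j t))))"

definition ader_output :: "(nat \<Rightarrow> 'a \<Rightarrow> real) \<Rightarrow> nat \<Rightarrow> real \<Rightarrow> (nat \<Rightarrow> nat \<Rightarrow> 'a::real_vector) \<Rightarrow> nat \<Rightarrow> 'a" where
  "ader_output f N alpha ex t = (\<Sum>i\<in>{1..N}. ader_weight f N alpha ex t i *\<^sub>R ex i t)"

end

theory Submission
  imports Defs "HOL-Probability.Hoeffding"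
begin

lemma hoeff_fin:
  fixes w y :: "nat \<Rightarrow> real"
  assumes S: "finite S" and w1: "sum w S = 1" and w0: "\<And>i. i\<in>S \<Longrightarrow> w i \<ge> 0"
    and yb: "\<And>i. i\<in>S \<Longrightarrow> a \<le> y i \<and> y i \<le> a + c" and c: "c > 0" and l: "l > 0"
  shows "(\<Sum>i\<in>S. w i * exp (-l * y i)) \<le> exp (-l * (\<Sum>i\<in>S. w i * y i) + l\<^sup>2 * c\<^sup>2 / 8)"
proof -
  define m where "m = (\<Sum>i\<in>S. w i * y i)"
  define p where "p = (m - a) / c"
  define h where "h = l * c"
  have h0: "h \<ge> 0" using l c by (simp add: h_def)
  have ma: "m \<ge> a"
  proof -
    have "(\<Sum>i\<in>S. w i * a) \<le> m" unfolding m_def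
      by (intro sum_mono mult_left_mono) (use yb w0 in auto)
    thus ?thesis using w1 by (simp add: sum_distrib_right[symmetric])
  qed
  have mb: "m \<le> a + c"
  proof -
    have "m \<le> (\<Sum>i\<in>S. w i * (a + c))" unfolding m_def
      by (intro sum_mono mult_left_mono) (use yb w0 in auto)
    thus ?thesis using w1 by (simp add: sum_distrib_right[symmetric])
  qed
  have p0: "p \<ge> 0" "p \<le> 1" using ma mb c by (auto simp: p_def divide_simps)
  have pt: "exp (-l * y i) \<le> ((a + c - y i) / c) * exp (-l * a) + ((y i - a) / c) * exp (-l * (a + c))"
    if "i \<in> S" for i
  proof -
    define s where "s = (y i - a) / c"
    have s: "0 \<le> s" "s \<le> 1" using yb[OF that] c by (auto simp: s_def divide_simps)
    have "exp ((1 - s) * (-l * a) + s * (-l * (a + c))) \<le> (1 - s) * exp (-l * a) + s * exp (-l * (a + c))"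
      using convex_onD[OF exp_convex, of s "-l * a" "-l * (a + c)"] s by simp
    moreover have "(1 - s) * (-l * a) + s * (-l * (a + c)) = -l * y i"
      using c by (simp add: s_def field_simps)
    moreover have "1 - s = (a + c - y i) / c" using c by (simp add: s_def field_simps)
    ultimately show ?thesis by (simp add: s_def)
  qed
  have "(\<Sum>i\<in>S. w i * exp (-l * y i)) \<le>
        (\<Sum>i\<in>S. w i * (((a + c - y i) / c) * exp (-l * a) + ((y i - a) / c) * exp (-l * (a + c))))"
    by (intro sum_mono mult_left_mono pt w0)
  also have "\<dots> = ((a + c - m) / c) * exp (-l * a) + ((m - a) / c) * exp (-l * (a + c))"
  proof -
    have "(\<Sum>i\<in>S. w i * (((a + c - y i) / c) * exp (-l * a) + ((y i - a) / c) * exp (-l * (a + c))))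
      = (\<Sum>i\<in>S. (w i * (a + c) - w i * y i) * (exp (-l * a) / c) + (w i * y i - w i * a) * (exp (-l * (a + c)) / c))"
      by (intro sum.cong) (auto simp: field_simps)
    also have "\<dots> = (\<Sum>i\<in>S. w i * (a + c) - w i * y i) * (exp (-l * a) / c) + (\<Sum>i\<in>S. w i * y i - w i * a) * (exp (-l * (a + c)) / c)"
      by (simp only: sum.distrib sum_distrib_right)
    also have "\<dots> = ((a + c) - m) * (exp (-l * a) / c) + (m - a) * (exp (-l * (a + c)) / c)"
      by (simp add: sum_subtractf sum_distrib_right[symmetric] m_def w1)
    finally show ?thesis by simp
  qed
  also have "\<dots> = exp (-l * a) * (1 - p + p * exp (-h))"
    using c by (simp add: p_def h_def field_simps exp_add[symmetric] exp_diff)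
  also have "1 - p + p * exp (-h) \<le> exp (h\<^sup>2 / 8 - h * p)"
  proof -
    have pos: "1 - p + p * exp (-h) > 0"
    proof (cases "p = 1")
      case True thus ?thesis by simp
    next
      case False thus ?thesis using p0 by (smt (verit) exp_gt_zero mult_nonneg_nonneg)
    qed
    have aux: "-h * (1 - p) + ln (1 + (1 - p) * (exp h - 1)) \<le> h\<^sup>2 / 8"
      using Hoeffdings_lemma_aux[of h "1 - p"] h0 p0 by simp
    have "1 + (1 - p) * (exp h - 1) = exp h * (1 - p + p * exp (-h))"
      by (simp add: algebra_simps exp_minus)
    hence "ln (1 + (1 - p) * (exp h - 1)) = h + ln (1 - p + p * exp (-h))"
      using pos by (simp add: ln_mult)
    with aux have "ln (1 - p + p * exp (-h)) \<le> h\<^sup>2 / 8 - h * p" by (simp add: algebra_simps)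
    thus ?thesis using pos by (metis exp_le_cancel_iff exp_ln)
  qed
  hence "exp (-l * a) * (1 - p + p * exp (-h)) \<le> exp (-l * a) * exp (h\<^sup>2 / 8 - h * p)"
    by simp
  also have "\<dots> = exp (-l * m + l\<^sup>2 * c\<^sup>2 / 8)"
    using c by (simp add: exp_add[symmetric] p_def h_def field_simps power2_eq_square)
  finally show ?thesis by (simp add: m_def)
qed

definition Lc :: "(nat \<Rightarrow> 'a \<Rightarrow> real) \<Rightarrow> (nat \<Rightarrow> nat \<Rightarrow> 'a) \<Rightarrow> nat \<Rightarrow> nat \<Rightarrow> real" where
  "Lc f ex s i = (\<Sum>\<tau>=1..s. f \<tau> (ex i \<tau>))"
definition w1 :: "nat \<Rightarrow> nat \<Rightarrow> real" where
  "w1 N i = (1 + 1 / real N) / (real i * (real i + 1))"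
definition Wt :: "(nat \<Rightarrow> 'a \<Rightarrow> real) \<Rightarrow> nat \<Rightarrow> real \<Rightarrow> (nat \<Rightarrow> nat \<Rightarrow> 'a) \<Rightarrow> nat \<Rightarrow> real" where
  "Wt f N alpha ex t = (\<Sum>j=1..N. w1 N j * exp (- alpha * Lc f ex (t - 1) j))"

lemma sum_inv_prod: "(\<Sum>i=1..n. 1 / (real i * (real i + 1))) = real n / (real n + 1)"
proof (induction n)
  case 0 show ?case by simp
next
  case (Suc n)
  have "(\<Sum>i=1..Suc n. 1 / (real i * (real i + 1))) = real n / (real n + 1) + 1 / ((real n + 1) * (real n + 2))"
    using Suc.IH by (simp add: add.commute)
  also have "\<dots> = real (Suc n) / (real (Suc n) + 1)"
  proof -
    have h: "real n + 1 > 0" "real n + 2 > 0" by simp_all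
    show ?thesis using h by (simp add: divide_simps) (simp add: algebra_simps)
  qed
  finally show ?case .
qed

lemma sum_w1: assumes "N \<ge> 1" shows "(\<Sum>i=1..N. w1 N i) = 1"
proof -
  have "(\<Sum>i=1..N. w1 N i) = (1 + 1 / real N) * (\<Sum>i=1..N. 1 / (real i * (real i + 1)))"
    unfolding w1_def by (simp add: sum_distrib_left)
  also have "\<dots> = 1"
  proof -
    have "real N + real N * real N > 0" using assms by (simp add: add_pos_pos)
    thus ?thesis unfolding sum_inv_prod using assms by (simp add: field_simps)
  qed
  finally show ?thesis .
qed

lemma w1_pos: "i \<ge> 1 \<Longrightarrow> w1 N i > 0"
  unfolding w1_def by (auto intro!: divide_pos_pos add_pos_nonneg)

lemma Wt_pos: "N \<ge> 1 \<Longrightarrow> Wt f N alpha ex t > 0"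
  unfolding Wt_def by (intro sum_pos) (auto intro!: mult_pos_pos w1_pos)

lemma Lc_Suc: "Lc f ex (Suc s) i = Lc f ex s i + f (Suc s) (ex i (Suc s))"
  by (simp add: Lc_def)

lemma weight_closed:
  assumes N: "N \<ge> 1" and t: "t \<ge> 1"
  shows "ader_weight f N alpha ex t i = w1 N i * exp (- alpha * Lc f ex (t - 1) i) / Wt f N alpha ex t"
  using t
proof (induction t arbitrary: i)
  case 0 thus ?case by simp
next
  case (Suc t)
  show ?case
  proof (cases "t = 0")
    case True
    have "Wt f N alpha ex 1 = 1" using sum_w1[OF N] by (simp add: Wt_def Lc_def)
    thus ?thesis using True by (simp add: Lc_def w1_def)
  next
    case False
    hence t1: "t \<ge> 1" by simp
    define E where "E j = exp (- alpha * f t (ex j t))" for j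
    have IH: "ader_weight f N alpha ex t j = w1 N j * exp (- alpha * Lc f ex (t - 1) j) / Wt f N alpha ex t" for j
      using Suc.IH t1 by blast
    have Lt: "Lc f ex t j = Lc f ex (t - 1) j + f t (ex j t)" for j
      using Lc_Suc[of f ex "t - 1" j] t1 by simp
    have ex: "exp (- alpha * Lc f ex (Suc t - 1) j) = exp (- alpha * Lc f ex (t - 1) j) * E j" for j
      by (simp add: Lt E_def algebra_simps exp_add[symmetric])
    have ex': "exp (- alpha * Lc f ex t j) = exp (- alpha * Lc f ex (t - 1) j) * E j" for j
      by (simp add: Lt E_def algebra_simps exp_add[symmetric])
    have "(\<Sum>j=1..N. ader_weight f N alpha ex t j * E j) = (\<Sum>j=1..N. w1 N j * exp (- alpha * Lc f ex (t - 1) j) * E j / Wt f N alpha ex t)"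
      by (simp add: IH)
    also have "\<dots> = (\<Sum>j=1..N. w1 N j * exp (- alpha * Lc f ex t j)) / Wt f N alpha ex t"
      unfolding sum_divide_distrib by (rule sum.cong) (simp_all only: ex' mult.assoc)
    also have "\<dots> = Wt f N alpha ex (Suc t) / Wt f N alpha ex t"
      by (simp add: Wt_def)
    finally have den: "(\<Sum>j=1..N. ader_weight f N alpha ex t j * E j) = Wt f N alpha ex (Suc t) / Wt f N alpha ex t" .
    have "ader_weight f N alpha ex (Suc t) i = ader_weight f N alpha ex t i * E i / (\<Sum>j=1..N. ader_weight f N alpha ex t j * E j)"
      using False by (simp add: E_def)
    also have "\<dots> = (w1 N i * exp (- alpha * Lc f ex (t - 1) i) / Wt f N alpha ex t) * E i / (Wt f N alpha ex (Suc t) / Wt f N alpha ex t)"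
      by (subst den) (simp only: IH)
    also have "\<dots> = w1 N i * exp (- alpha * Lc f ex t i) / Wt f N alpha ex (Suc t)"
      unfolding ex' using Wt_pos[OF N, of f alpha ex t] Wt_pos[OF N, of f alpha ex "Suc t"]
      by (simp add: field_simps)
    also have "\<dots> = w1 N i * exp (- alpha * Lc f ex (Suc t - 1) i) / Wt f N alpha ex (Suc t)"
      by simp
    finally show ?thesis .
  qed
qed

lemma weight_ratio:
  assumes N: "N \<ge> 1" and t: "t \<ge> 1"
  shows "(\<Sum>j=1..N. ader_weight f N alpha ex t j * exp (- alpha * f t (ex j t))) = Wt f N alpha ex (Suc t) / Wt f N alpha ex t"
proof -
  have Lt: "Lc f ex t j = Lc f ex (t - 1) j + f t (ex j t)" for j
    using Lc_Suc[of f ex "t - 1" j] t by simp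
  have ex': "exp (- alpha * Lc f ex t j) = exp (- alpha * Lc f ex (t - 1) j) * exp (- alpha * f t (ex j t))" for j
    by (simp add: Lt algebra_simps exp_add[symmetric])
  have "(\<Sum>j=1..N. ader_weight f N alpha ex t j * exp (- alpha * f t (ex j t))) = (\<Sum>j=1..N. w1 N j * exp (- alpha * Lc f ex (t - 1) j) * exp (- alpha * f t (ex j t)) / Wt f N alpha ex t)"
    by (simp add: weight_closed[OF N t])
  also have "\<dots> = (\<Sum>j=1..N. w1 N j * exp (- alpha * Lc f ex t j)) / Wt f N alpha ex t"
    unfolding sum_divide_distrib by (rule sum.cong) (simp_all only: ex' mult.assoc)
  also have "\<dots> = Wt f N alpha ex (Suc t) / Wt f N alpha ex t"
    by (simp add: Wt_def)
  finally show ?thesis .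
qed

lemma weight_sum:
  assumes N: "N \<ge> 1" and t: "t \<ge> 1"
  shows "(\<Sum>j=1..N. ader_weight f N alpha ex t j) = 1"
proof -
  have "(\<Sum>j=1..N. ader_weight f N alpha ex t j) = (\<Sum>j=1..N. w1 N j * exp (- alpha * Lc f ex (t - 1) j)) / Wt f N alpha ex t"
    by (simp add: weight_closed[OF N t] sum_divide_distrib)
  also have "\<dots> = 1" using Wt_pos[OF N, of f alpha ex t] by (simp add: Wt_def)
  finally show ?thesis .
qed

lemma weight_nonneg:
  assumes N: "N \<ge> 1" and t: "t \<ge> 1" and i: "i \<ge> 1"
  shows "ader_weight f N alpha ex t i \<ge> 0"
  unfolding weight_closed[OF N t]
  by (intro divide_nonneg_pos mult_nonneg_nonneg) (use Wt_pos[OF N] w1_pos[OF i] in \<open>auto simp: less_imp_le\<close>)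

lemma meta_regret:
  fixes f :: "nat \<Rightarrow> 'a::real_vector \<Rightarrow> real" and ex :: "nat \<Rightarrow> nat \<Rightarrow> 'a"
  assumes N: "N \<ge> 1" and al: "alpha > 0" and c: "c > 0"
    and conv: "\<And>t. convex_on X (f t)"
    and exX: "\<And>i t. i \<in> {1..N} \<Longrightarrow> ex i t \<in> X"
    and bd: "\<And>t x. x \<in> X \<Longrightarrow> a \<le> f t x \<and> f t x \<le> a + c"
    and k: "k \<in> {1..N}"
  shows "(\<Sum>t=1..T. f t (ader_output f N alpha ex t)) \<le> Lc f ex T k + ln (1 / w1 N k) / alpha + real T * (alpha * c\<^sup>2 / 8)"
proof -
  let ?W = "Wt f N alpha ex"
  have step: "f t (ader_output f N alpha ex t) \<le> (ln (?W t) - ln (?W (Suc t))) / alpha + alpha * c\<^sup>2 / 8"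
    if t: "t \<in> {1..T}" for t
  proof -
    have t1: "t \<ge> 1" using t by simp
    define m where "m = (\<Sum>i=1..N. ader_weight f N alpha ex t i * f t (ex i t))"
    have "f t (ader_output f N alpha ex t) \<le> m"
      unfolding ader_output_def m_def
      by (rule convex_on_sum[OF _ _ conv]) (use N weight_sum[OF N t1] in \<open>simp_all add: weight_nonneg[OF N t1] exX\<close>)
    moreover have "?W (Suc t) / ?W t \<le> exp (- alpha * m + alpha\<^sup>2 * c\<^sup>2 / 8)"
      unfolding weight_ratio[OF N t1, symmetric] m_def
      by (rule hoeff_fin[where a=a]) (use weight_sum[OF N t1] in \<open>simp_all add: weight_nonneg[OF N t1] bd[OF exX] c al\<close>)
    hence "ln (?W (Suc t) / ?W t) \<le> ln (exp (- alpha * m + alpha\<^sup>2 * c\<^sup>2 / 8))"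
      using Wt_pos[OF N, of f alpha ex t] Wt_pos[OF N, of f alpha ex "Suc t"]
      by (intro ln_mono) auto
    hence "ln (?W (Suc t)) - ln (?W t) \<le> - alpha * m + alpha\<^sup>2 * c\<^sup>2 / 8"
      using Wt_pos[OF N, of f alpha ex t] Wt_pos[OF N, of f alpha ex "Suc t"]
      by (simp add: ln_div)
    hence "m \<le> (ln (?W t) - ln (?W (Suc t))) / alpha + alpha * c\<^sup>2 / 8"
      using al by (simp add: field_simps power2_eq_square)
    ultimately show ?thesis by linarith
  qed
  have "(\<Sum>t=1..T. f t (ader_output f N alpha ex t)) \<le> (\<Sum>t=1..T. (ln (?W t) - ln (?W (Suc t))) / alpha + alpha * c\<^sup>2 / 8)"
    by (rule sum_mono) (rule step)
  also have "\<dots> = (\<Sum>t=1..T. ln (?W t) - ln (?W (Suc t))) / alpha + real T * (alpha * c\<^sup>2 / 8)"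
    by (simp add: sum.distrib sum_divide_distrib)
  also have "(\<Sum>t=1..T. ln (?W t) - ln (?W (Suc t))) = ln (?W 1) - ln (?W (Suc T))"
  proof -
    have "(\<Sum>t=1..T. ln (?W (Suc t)) - ln (?W t)) = ln (?W (Suc T)) - ln (?W 1)"
      by (rule sum_Suc_diff) simp
    moreover have "(\<Sum>t=1..T. ln (?W t) - ln (?W (Suc t))) = - (\<Sum>t=1..T. ln (?W (Suc t)) - ln (?W t))"
      by (simp add: sum_negf[symmetric])
    ultimately show ?thesis by simp
  qed
  also have "?W 1 = 1" using sum_w1[OF N] by (simp add: Wt_def Lc_def)
  also have "- ln (?W (Suc T)) \<le> ln (1 / w1 N k) + alpha * Lc f ex T k"
  proof -
    have "w1 N k * exp (- alpha * Lc f ex T k) \<le> ?W (Suc T)"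
      unfolding Wt_def diff_Suc_1 using k
      by (intro member_le_sum[of k "{1..N}" "\<lambda>j. w1 N j * exp (- alpha * Lc f ex T j)"])
         (auto intro!: mult_nonneg_nonneg less_imp_le[OF w1_pos])
    hence "ln (w1 N k * exp (- alpha * Lc f ex T k)) \<le> ln (?W (Suc T))"
      using w1_pos[of k N] k by (intro ln_mono) auto
    thus ?thesis using w1_pos[of k N] k by (simp add: ln_mult ln_div)
  qed
  hence "(ln 1 - ln (?W (Suc T))) / alpha \<le> (ln (1 / w1 N k) + alpha * Lc f ex T k) / alpha"
    using al by (intro divide_right_mono) auto
  hence "(ln 1 - ln (?W (Suc T))) / alpha \<le> Lc f ex T k + ln (1 / w1 N k) / alpha"
    using al by (simp add: field_simps)
  finally show ?thesis by simp
qed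

lemma tangent_ineq:
  fixes f :: "'a::real_inner \<Rightarrow> real"
  assumes X: "convex X" and cf: "convex_on X f"
    and d: "(f has_derivative (\<lambda>h. g \<bullet> h)) (at x within X)" and x: "x \<in> X" and y: "y \<in> X"
  shows "f x + g \<bullet> (y - x) \<le> f y"
proof -
  define \<gamma> where "\<gamma> = (\<lambda>s::real. x + s *\<^sub>R (y - x))"
  have \<gamma>eq: "\<gamma> s = (1 - s) *\<^sub>R x + s *\<^sub>R y" for s
    unfolding \<gamma>_def by (simp add: algebra_simps)
  have \<gamma>X: "\<gamma> ` {0..1} \<subseteq> X"
    using X x y unfolding \<gamma>eq by (auto intro: convexD_alt simp: convex_alt)
  have g0: "\<gamma> 0 = x" by (simp add: \<gamma>_def)
  have dg: "(\<gamma> has_derivative (\<lambda>s. s *\<^sub>R (y-x))) (at 0 within {0..1})"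
    unfolding \<gamma>_def by (auto intro!: derivative_eq_intros)
  have df: "(f has_derivative (\<lambda>h. g \<bullet> h)) (at (\<gamma> 0) within \<gamma> ` {0..1})"
    using has_derivative_subset[OF d \<gamma>X] g0 by simp
  have "((f \<circ> \<gamma>) has_derivative ((\<lambda>h. g \<bullet> h) \<circ> (\<lambda>s. s *\<^sub>R (y-x)))) (at 0 within {0..1})"
    by (rule diff_chain_within[OF dg df])
  moreover have "((\<lambda>h. g \<bullet> h) \<circ> (\<lambda>s. s *\<^sub>R (y-x))) = (*) (g \<bullet> (y - x))"
    by (auto simp: fun_eq_iff)
  ultimately have "((f \<circ> \<gamma>) has_field_derivative (g \<bullet> (y - x))) (at 0 within {0..1})"
    by (simp add: has_field_derivative_def)
  hence lim: "((\<lambda>s. ((f \<circ> \<gamma>) s - (f \<circ> \<gamma>) 0) / (s - 0)) \<longlongrightarrow> g \<bullet> (y - x)) (at_right 0)"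
    unfolding has_field_derivative_iff using at_within_Icc_at_right[of "0::real" 1] by simp
  have ev: "eventually (\<lambda>s. ((f \<circ> \<gamma>) s - (f \<circ> \<gamma>) 0) / (s - 0) \<le> f y - f x) (at_right (0::real))"
    using eventually_at_right_real[of 0 "1::real", OF zero_less_one]
  proof (rule eventually_mono)
    fix s :: real assume s: "s \<in> {0<..<1}"
    have "f (\<gamma> s) \<le> (1 - s) * f x + s * f y"
      unfolding \<gamma>eq using s x y by (intro convex_onD[OF cf]) auto
    hence "f (\<gamma> s) - f x \<le> s * (f y - f x)" by (simp add: algebra_simps)
    thus "((f \<circ> \<gamma>) s - (f \<circ> \<gamma>) 0) / (s - 0) \<le> f y - f x"
      using s g0 by (simp add: divide_simps mult.commute)
  qed
  have "g \<bullet> (y - x) \<le> f y - f x"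
    by (rule tendsto_upperbound[OF lim ev]) simp
  thus ?thesis by simp
qed

lemma sq_diff_bound:
  fixes d e \<delta> D :: real
  assumes "0 \<le> d" "0 \<le> e" "d \<le> D" "e \<le> D" "d \<le> e + \<delta>" "0 \<le> \<delta>"
  shows "d\<^sup>2 - e\<^sup>2 \<le> 2 * D * \<delta>"
proof (cases "d \<le> e")
  case True
  hence "d\<^sup>2 \<le> e\<^sup>2" using assms by (simp add: power_mono)
  thus ?thesis using assms by (smt (verit) mult_nonneg_nonneg)
next
  case False
  have "d\<^sup>2 - e\<^sup>2 = (d - e) * (d + e)" by (simp add: power2_eq_square algebra_simps)
  also have "\<dots> \<le> \<delta> * (2 * D)" using assms False by (intro mult_mono) auto
  finally show ?thesis by (simp add: mult_ac)
qed

lemma expert_in: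
  assumes X: "closed X" "X \<noteq> {}" and A4: "\<And>t x. x \<in> X \<Longrightarrow> Phi t x \<in> X" and x1: "\<And>i. x1 i \<in> X"
  shows "ader_expert X Phi grad eta x1 i t \<in> X"
  by (induction t) (auto simp: x1 intro!: A4 closest_point_in_set X)

lemma expert_regret:
  fixes X :: "'a::euclidean_space set"
  assumes X: "closed X" "convex X" "X \<noteq> {}"
    and conv: "\<And>t. convex_on X (f t)"
    and grad: "\<And>t x. x \<in> X \<Longrightarrow> (f t has_derivative (\<lambda>h. grad t x \<bullet> h)) (at x within X)"
    and A2: "\<And>t x. x \<in> X \<Longrightarrow> norm (grad t x) \<le> G"
    and A3: "\<And>x y. x \<in> X \<Longrightarrow> y \<in> X \<Longrightarrow> dist x y \<le> D"
    and A4: "\<And>t x. x \<in> X \<Longrightarrow> Phi t x \<in> X"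
            "\<And>t x y. x \<in> X \<Longrightarrow> y \<in> X \<Longrightarrow> dist (Phi t x) (Phi t y) \<le> dist x y"
    and x1: "\<And>i. x1 i \<in> X"
    and u: "\<And>t. t \<in> {1..T+1} \<Longrightarrow> u t \<in> X"
    and e: "eta i > 0"
  shows "(\<Sum>t=1..T. f t (ader_expert X Phi grad eta x1 i t) - f t (u t))
     \<le> (D\<^sup>2 + 2 * D * (\<Sum>t = 1..T. norm (u (t + 1) - Phi t (u t)))) / (2 * eta i) + eta i * real T * G\<^sup>2 / 2"
proof -
  define x where "x t = ader_expert X Phi grad eta x1 i t" for t
  define g where "g t = grad t (x t)" for t
  define xb where "xb t = closest_point X (x t - eta i *\<^sub>R g t)" for t
  define d where "d t = norm (x t - u t)" for t
  define \<delta> where "\<delta> t = norm (u (t + 1) - Phi t (u t))" for t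
  have xX: "x t \<in> X" for t unfolding x_def by (rule expert_in[OF X(1,3) A4(1) x1])
  have xbX: "xb t \<in> X" for t unfolding xb_def by (rule closest_point_in_set[OF X(1,3)])
  have xS: "x (Suc t) = Phi t (xb t)" if "t \<ge> 1" for t
    using that unfolding x_def xb_def g_def by simp
  have step: "f t (x t) - f t (u t) \<le> (d t ^ 2 - d (Suc t) ^ 2 + 2 * D * \<delta> t) / (2 * eta i) + eta i * G\<^sup>2 / 2"
    if t: "t \<in> {1..T}" for t
  proof -
    have ut: "u t \<in> X" and ut1: "u (Suc t) \<in> X" using u t by auto
    have "f t (x t) + g t \<bullet> (u t - x t) \<le> f t (u t)"
      unfolding g_def by (rule tangent_ineq[OF X(2) conv grad[OF xX] xX ut])
    hence 1: "f t (x t) - f t (u t) \<le> g t \<bullet> (x t - u t)"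
      by (simp add: inner_diff_right)
    have "norm (xb t - u t) \<le> norm ((x t - eta i *\<^sub>R g t) - u t)"
      using closest_point_lipschitz[OF X(2,1,3), of "x t - eta i *\<^sub>R g t" "u t"]
        closest_point_self[OF ut]
      by (simp add: xb_def dist_norm)
    hence "norm (xb t - u t) ^ 2 \<le> norm ((x t - u t) - eta i *\<^sub>R g t) ^ 2"
      by (simp add: power_mono algebra_simps)
    also have "\<dots> = d t ^ 2 - 2 * eta i * (g t \<bullet> (x t - u t)) + eta i ^ 2 * norm (g t) ^ 2"
      unfolding d_def power2_norm_eq_inner
      by (simp add: inner_diff_left inner_diff_right inner_commute algebra_simps power2_eq_square)
    also have "\<dots> \<le> d t ^ 2 - 2 * eta i * (g t \<bullet> (x t - u t)) + eta i ^ 2 * G ^ 2"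
      using A2[OF xX, of t] by (simp add: g_def mult_left_mono power_mono)
    finally have 2: "norm (xb t - u t) ^ 2 \<le> d t ^ 2 - 2 * eta i * (g t \<bullet> (x t - u t)) + eta i ^ 2 * G ^ 2" .
    have "d (Suc t) = norm (Phi t (xb t) - u (Suc t))" using xS t by (simp add: d_def)
    also have "\<dots> \<le> norm (Phi t (xb t) - Phi t (u t)) + norm (u (Suc t) - Phi t (u t))"
      using norm_triangle_ineq[of "Phi t (xb t) - Phi t (u t)" "Phi t (u t) - u (Suc t)"]
      by (simp add: norm_minus_commute)
    also have "\<dots> \<le> norm (xb t - u t) + \<delta> t"
      using A4(2)[OF xbX ut, of t] by (simp add: dist_norm \<delta>_def)
    finally have dle: "d (Suc t) \<le> norm (xb t - u t) + \<delta> t" .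
    have 3: "d (Suc t) ^ 2 - norm (xb t - u t) ^ 2 \<le> 2 * D * \<delta> t"
    proof (rule sq_diff_bound)
      show "d (Suc t) \<le> D" unfolding d_def using A3[OF xX ut1, of "Suc t"] by (simp add: dist_norm)
      show "norm (xb t - u t) \<le> D" using A3[OF xbX ut, of t] by (simp add: dist_norm)
    qed (use dle in \<open>auto simp: d_def \<delta>_def\<close>)
    from 2 3 have "2 * eta i * (g t \<bullet> (x t - u t)) \<le> d t ^ 2 - d (Suc t) ^ 2 + 2 * D * \<delta> t + eta i ^ 2 * G ^ 2"
      by linarith
    hence "g t \<bullet> (x t - u t) \<le> (d t ^ 2 - d (Suc t) ^ 2 + 2 * D * \<delta> t + eta i ^ 2 * G ^ 2) / (2 * eta i)"
      using e by (simp add: field_simps)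
    also have "\<dots> = (d t ^ 2 - d (Suc t) ^ 2 + 2 * D * \<delta> t) / (2 * eta i) + eta i * G\<^sup>2 / 2"
      using e by (simp add: field_simps power2_eq_square)
    finally show ?thesis using 1 by linarith
  qed
  have "(\<Sum>t=1..T. f t (x t) - f t (u t)) \<le> (\<Sum>t=1..T. (d t ^ 2 - d (Suc t) ^ 2 + 2 * D * \<delta> t) / (2 * eta i) + eta i * G\<^sup>2 / 2)"
    by (rule sum_mono) (rule step)
  also have "\<dots> = ((\<Sum>t=1..T. d t ^ 2 - d (Suc t) ^ 2) + 2 * D * (\<Sum>t=1..T. \<delta> t)) / (2 * eta i) + real T * (eta i * G\<^sup>2 / 2)"
    by (simp add: sum.distrib sum_divide_distrib[symmetric] sum_distrib_left)
  also have "(\<Sum>t=1..T. d t ^ 2 - d (Suc t) ^ 2) = d 1 ^ 2 - d (Suc T) ^ 2"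
  proof -
    have "(\<Sum>t=1..T. d (Suc t) ^ 2 - d t ^ 2) = d (Suc T) ^ 2 - d 1 ^ 2"
      by (rule sum_Suc_diff) simp
    moreover have "(\<Sum>t=1..T. d t ^ 2 - d (Suc t) ^ 2) = - (\<Sum>t=1..T. d (Suc t) ^ 2 - d t ^ 2)"
      by (simp add: sum_negf[symmetric])
    ultimately show ?thesis by simp
  qed
  also have "d 1 ^ 2 - d (Suc T) ^ 2 \<le> D\<^sup>2"
  proof -
    have "d 1 \<le> D" unfolding d_def using A3[OF xX u, of 1 1] by (simp add: dist_norm)
    moreover have "d 1 \<ge> 0" by (simp add: d_def)
    ultimately have "d 1 ^ 2 \<le> D ^ 2" by (simp add: power_mono)
    moreover have "d (Suc T) ^ 2 \<ge> 0" by simp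
    ultimately show ?thesis by linarith
  qed
  finally show ?thesis using e
    by (simp add: x_def \<delta>_def divide_right_mono algebra_simps)
qed

lemma final_alg:
  fixes D G s q R :: real
  assumes D: "D > 0" and G: "G > 0" and s: "s > 0" and q: "q > 0" and R: "R \<ge> 1"
    and qR: "q\<^sup>2 \<le> R" and Rq: "R < 4 * q\<^sup>2"
  shows "(D\<^sup>2 * R) / (2 * (q * D / G * (1 / s))) + (q * D / G * (1 / s)) * s\<^sup>2 * G\<^sup>2 / 2
     \<le> 3 * G / 2 * sqrt (s\<^sup>2 * (D\<^sup>2 * R))"
proof -
  define r where "r = sqrt R"
  have r0: "r > 0" using R by (simp add: r_def)
  have rR: "r\<^sup>2 = R" using R by (simp add: r_def)
  have qr: "q \<le> r" using qR unfolding r_def by (meson real_le_rsqrt)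
  have rq: "r \<le> 2 * q"
  proof -
    have "r\<^sup>2 \<le> (2 * q)\<^sup>2" using Rq rR by (simp add: power_mult_distrib)
    thus ?thesis using q r0 by (meson less_le power2_le_imp_le zero_le_mult_iff zero_le_numeral)
  qed
  have sq: "sqrt (s\<^sup>2 * (D\<^sup>2 * R)) = s * D * r"
    using s D R by (simp add: r_def real_sqrt_mult)
  have t1: "(D\<^sup>2 * R) / (2 * (q * D / G * (1 / s))) = D * G * s * r * (r / (2 * q))"
    using D G s q by (simp add: rR[symmetric] field_simps power2_eq_square)
  have t1b: "D * G * s * r * (r / (2 * q)) \<le> D * G * s * r"
    using rq q D G s r0 by (simp add: divide_le_eq mult_le_cancel_left_pos)
  have t2: "(q * D / G * (1 / s)) * s\<^sup>2 * G\<^sup>2 / 2 = q * D * G * s / 2"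
    using G s by (simp add: field_simps power2_eq_square)
  have t2b: "q * D * G * s / 2 \<le> r * D * G * s / 2"
    using qr D G s by (simp add: mult_right_mono)
  show ?thesis unfolding sq t1 t2 using t1b t2b by (simp add: algebra_simps)
qed

lemma alpha_facts:
  fixes c :: real and T :: nat
  assumes T: "T \<ge> 1" and c: "c > 0"
  shows "sqrt (8 / (real T * c\<^sup>2)) = 4 / (c * sqrt (2 * real T))"
proof -
  have pos: "c * sqrt (2 * real T) > 0" using T c by simp
  have "8 / (real T * c\<^sup>2) = (4 / (c * sqrt (2 * real T)))\<^sup>2"
    using T c by (simp add: power_divide power_mult_distrib)
  thus ?thesis using pos by simp
qed

lemma tal_alg:
  fixes w c :: real
  assumes "w > 0" "c > 0"
  shows "w * w / 2 * (4 / (c * w) * c\<^sup>2 / 8) = c * w / 4"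
  using assms by (simp add: field_simps power2_eq_square)

theorem theorem5:
  fixes X :: "'a::euclidean_space set"
    and f :: "nat \<Rightarrow> 'a \<Rightarrow> real"
    and grad :: "nat \<Rightarrow> 'a \<Rightarrow> 'a"
    and Phi :: "nat \<Rightarrow> 'a \<Rightarrow> 'a"
    and x1 :: "nat \<Rightarrow> 'a"
    and u :: "nat \<Rightarrow> 'a"
    and a c G D :: real and T :: nat
  assumes X: "closed X" "convex X" "X \<noteq> {}"
    and conv: "\<And>t. convex_on X (f t)"
    and grad: "\<And>t x. x \<in> X \<Longrightarrow> (f t has_derivative (\<lambda>h. grad t x \<bullet> h)) (at x within X)"
    and A1: "\<And>t x. x \<in> X \<Longrightarrow> a \<le> f t x \<and> f t x \<le> a + c"
    and A2: "\<And>t x. x \<in> X \<Longrightarrow> norm (grad t x) \<le> G"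
    and A3: "0 \<in> X" "\<And>x y. x \<in> X \<Longrightarrow> y \<in> X \<Longrightarrow> dist x y \<le> D"
    and A4: "\<And>t x. x \<in> X \<Longrightarrow> Phi t x \<in> X"
            "\<And>t x y. x \<in> X \<Longrightarrow> y \<in> X \<Longrightarrow> dist (Phi t x) (Phi t y) \<le> dist x y"
    and pos: "T \<ge> 1" "c > 0" "G > 0" "D > 0"
    and x1: "\<And>i. x1 i \<in> X"
    and u: "\<And>t. t \<in> {1..T+1} \<Longrightarrow> u t \<in> X"
  defines "N \<equiv> nat \<lceil>log 2 (1 + 2 * real T) / 2\<rceil> + 1"
    and "eta \<equiv> (\<lambda>i. 2 ^ (i - 1) * D / G * sqrt (1 / real T))"
    and "alpha \<equiv> sqrt (8 / (real T * c\<^sup>2))"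
    and "P \<equiv> (\<Sum>t = 1..T. norm (u (t + 1) - Phi t (u t)))"
    and "k \<equiv> \<lfloor>log 2 (1 + 2 * (\<Sum>t = 1..T. norm (u (t + 1) - Phi t (u t))) / D) / 2\<rfloor> + 1"
  shows "(\<Sum>t = 1..T. f t (ader_output f N alpha (ader_expert X Phi grad eta x1) t))
           - (\<Sum>t = 1..T. f t (u t))
         \<le> 3 * G / 2 * sqrt (real T * (D\<^sup>2 + 2 * D * P))
           + c * sqrt (2 * real T) / 4 * (1 + 2 * ln (real_of_int k + 1))"
proof -
  let ?ex = "ader_expert X Phi grad eta x1"
  have N1: "N \<ge> 1" by (simp add: N_def)
  have P0: "P \<ge> 0" unfolding P_def by (simp add: sum_nonneg)
  have PT: "P \<le> real T * D"
  proof -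
    have "P \<le> real (card {1..T}) * D" unfolding P_def
    proof (rule sum_bounded_above)
      fix t assume t: "t \<in> {1..T}"
      have "u (t + 1) \<in> X" "Phi t (u t) \<in> X" using u t A4(1) by auto
      thus "norm (u (t + 1) - Phi t (u t)) \<le> D" using A3(2) by (simp add: dist_norm)
    qed
    thus ?thesis by simp
  qed
  define R where "R = 1 + 2 * P / D"
  have R1: "R \<ge> 1" using P0 pos by (simp add: R_def)
  have RT: "R \<le> 1 + 2 * real T" using PT pos by (simp add: R_def divide_le_eq mult.commute)
  define j where "j = \<lfloor>log 2 R / 2\<rfloor>"
  have kj: "k = j + 1" unfolding k_def j_def R_def P_def by simp
  have logR: "log 2 R \<ge> 0" using R1 by simp
  have j0: "j \<ge> 0" unfolding j_def using logR by simp
  define jn where "jn = nat j"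
  have jn: "real jn = real_of_int j" using j0 by (simp add: jn_def)
  define kn where "kn = Suc jn"
  have kk: "real_of_int k = real kn" using kj jn by (simp add: kn_def)
  define q :: real where "q = 2 ^ jn"
  have q0: "q > 0" by (simp add: q_def)
  have q2: "q\<^sup>2 = 2 powr (2 * real jn)"
  proof -
    have "2 powr (2 * real jn) = 2 powr (real (jn * 2))" by (simp add: mult.commute)
    also have "\<dots> = 2 ^ (jn * 2)" by (rule powr_realpow) simp
    also have "\<dots> = q\<^sup>2" by (simp add: q_def power_mult)
    finally show ?thesis by simp
  qed
  have "real_of_int j \<le> log 2 R / 2" unfolding j_def by linarith
  hence "2 * real jn \<le> log 2 R" using jn by simp
  hence qR: "q\<^sup>2 \<le> R" unfolding q2 using R1 by (subst le_log_iff[symmetric]) auto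
  have "log 2 R / 2 < real_of_int j + 1" unfolding j_def by linarith
  hence "log 2 R < 2 * real jn + 2" using jn by simp
  hence "R < 2 powr (2 * real jn + 2)" using R1 by (subst log_less_iff[symmetric]) auto
  also have "2 powr (2 * real jn + 2) = 4 * q\<^sup>2" unfolding q2 by (simp add: powr_add)
  finally have Rq: "R < 4 * q\<^sup>2" .
  have kN: "kn \<le> N"
  proof -
    have "log 2 R \<le> log 2 (1 + 2 * real T)" using R1 RT by (intro log_mono) auto
    hence "j \<le> \<lfloor>log 2 (1 + 2 * real T) / 2\<rfloor>" unfolding j_def by (intro floor_mono) simp
    also have "\<dots> \<le> \<lceil>log 2 (1 + 2 * real T) / 2\<rceil>" by (rule floor_le_ceiling)
    finally show ?thesis unfolding kn_def jn_def N_def by linarith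
  qed
  have kin: "kn \<in> {1..N}" using kN by (simp add: kn_def)
  define s where "s = sqrt (real T)"
  have s0: "s > 0" using pos by (simp add: s_def)
  have s2: "s\<^sup>2 = real T" by (simp add: s_def)
  have etak: "eta kn = q * D / G * (1 / s)"
    by (simp add: eta_def kn_def q_def s_def real_sqrt_divide)
  have eta0: "eta kn > 0" unfolding etak using q0 pos s0 by simp
  have exX: "?ex i t \<in> X" for i t by (rule expert_in[OF X(1,3) A4(1) x1])
  have al: "alpha = 4 / (c * sqrt (2 * real T))"
    unfolding alpha_def by (rule alpha_facts) (use pos in auto)
  have cs: "c * sqrt (2 * real T) > 0" using pos by simp
  have al0: "alpha > 0" unfolding al using cs by simp
  have meta: "(\<Sum>t=1..T. f t (ader_output f N alpha ?ex t)) \<le> Lc f ?ex T kn + ln (1 / w1 N kn) / alpha + real T * (alpha * c\<^sup>2 / 8)"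
    by (rule meta_regret[OF N1 al0 pos(2) conv _ A1 kin]) (rule exX)
  have expert: "(\<Sum>t=1..T. f t (?ex kn t) - f t (u t)) \<le> (D\<^sup>2 + 2 * D * P) / (2 * eta kn) + eta kn * real T * G\<^sup>2 / 2"
    unfolding P_def by (rule expert_regret[where eta=eta and i=kn, OF X conv grad A2 A3(2) A4 x1 u eta0])
  have Lc: "Lc f ?ex T kn = (\<Sum>t=1..T. f t (?ex kn t))" by (simp add: Lc_def)
  have DR: "D\<^sup>2 + 2 * D * P = D\<^sup>2 * R" using pos by (simp add: R_def field_simps power2_eq_square)
  have bound1: "(D\<^sup>2 + 2 * D * P) / (2 * eta kn) + eta kn * real T * G\<^sup>2 / 2 \<le> 3 * G / 2 * sqrt (real T * (D\<^sup>2 + 2 * D * P))"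
    using final_alg[OF pos(4) pos(3) s0 q0 R1 qR Rq] unfolding DR etak s2[symmetric]
    by (simp add: mult.assoc)
  have lnw: "ln (1 / w1 N kn) \<le> 2 * ln (real kn + 1)"
  proof -
    have w: "w1 N kn > 0" by (rule w1_pos) (simp add: kn_def)
    have "1 / w1 N kn = real kn * (real kn + 1) / (1 + 1 / real N)"
      by (simp add: w1_def)
    also have "\<dots> \<le> real kn * (real kn + 1)"
    proof -
      have d: "1 \<le> 1 + 1 / real N" by simp
      have x: "0 \<le> real kn * (real kn + 1)" by simp
      have "0 < 1 + 1 / real N" using d by linarith
      thus ?thesis using mult_left_mono[OF d x] by (simp add: pos_divide_le_eq)
    qed
    also have "\<dots> \<le> (real kn + 1) ^ 2" by (simp add: power2_eq_square)
    finally have "ln (1 / w1 N kn) \<le> ln ((real kn + 1) ^ 2)"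
      using w by (intro ln_mono) auto
    thus ?thesis by (simp add: ln_realpow)
  qed
  have inv_al: "1 / alpha = c * sqrt (2 * real T) / 4" unfolding al by simp
  have Tal: "real T * (alpha * c\<^sup>2 / 8) = c * sqrt (2 * real T) / 4"
  proof -
    have w: "real T = sqrt (2 * real T) * sqrt (2 * real T) / 2" by simp
    have w0: "sqrt (2 * real T) > 0" using pos by simp
    show ?thesis unfolding al by (subst (1) w, rule tal_alg[OF w0 pos(2)])
  qed
  have bound2: "ln (1 / w1 N kn) / alpha + real T * (alpha * c\<^sup>2 / 8) \<le> c * sqrt (2 * real T) / 4 * (1 + 2 * ln (real_of_int k + 1))"
  proof -
    have "ln (1 / w1 N kn) / alpha = ln (1 / w1 N kn) * (c * sqrt (2 * real T) / 4)"
      by (simp only: inv_al[symmetric]) simp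
    also have "\<dots> \<le> 2 * ln (real kn + 1) * (c * sqrt (2 * real T) / 4)"
      using lnw cs by (intro mult_right_mono) auto
    finally have X: "ln (1 / w1 N kn) / alpha \<le> 2 * ln (real kn + 1) * (c * sqrt (2 * real T) / 4)" .
    have eq: "c * sqrt (2 * real T) / 4 * (1 + 2 * ln (real kn + 1)) = c * sqrt (2 * real T) / 4 + 2 * ln (real kn + 1) * (c * sqrt (2 * real T) / 4)"
      by (simp only: ring_distribs mult_1_right mult.commute)
    show ?thesis unfolding Tal kk eq using X by linarith
  qed
  have "(\<Sum>t=1..T. f t (ader_output f N alpha ?ex t)) - (\<Sum>t = 1..T. f t (u t))
      \<le> (\<Sum>t=1..T. f t (?ex kn t) - f t (u t)) + (ln (1 / w1 N kn) / alpha + real T * (alpha * c\<^sup>2 / 8))"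
    using meta unfolding Lc by (simp add: sum_subtractf)
  also have "\<dots> \<le> 3 * G / 2 * sqrt (real T * (D\<^sup>2 + 2 * D * P)) + c * sqrt (2 * real T) / 4 * (1 + 2 * ln (real_of_int k + 1))"
    using expert bound1 bound2 by linarith
  finally show ?thesis .
qed

end
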